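(* Let $Q=(q_n)$ be a basic sequence and let $x=E_0.E_1E_2\cdots$ (w.r.t. $Q$) be $Q$-distribution normal. If $y=F_0.F_1F_2\cdots$ (w.r.t. $Q$) satisfies $$\lim_{N\to\infty}\frac1N\sum_{n=1}^N\frac{|E_n-F_n|+1}{q_n}=0,$$ then $y$ is $Q$-distribution normal.
   Context: A basic sequence is a sequence $Q=(q_n)_{n\ge1}$ of integers with $q_n\ge2$. The $Q$-Cantor series expansion of a real $x$ is the unique expansion $x=E_0+\sum_{n\ge1}\frac{E_n}{q_1\cdots q_n}$ with $E_0=\lfloor x\rfloor$, $E_n\in\{0,\dots,q_n-1\}$ and $E_n\ne q_n-1$ infinitely often; written $x=E_0.E_1E_2\cdots$ w.r.t. $Q$. Let $T_{Q,n}(x)=\left(\prod_{j=1}^n q_j\right)x \bmod 1$ (with $T_{Q,0}(x)=x\bmod1$). A real $x$ is $Q$-distribution normal if the sequence $(T_{Q,n}(x))_{n\ge0}$ is uniformly distributed modulo $1$. *)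

theory Defs
  imports "HOL-Analysis.Analysis"
begin

text \<open>A basic sequence Q = (q_n)_{n>=1}; the value at index 0 is irrelevant.\<close>
definition basic_sequence :: "(nat \<Rightarrow> nat) \<Rightarrow> bool" where
  "basic_sequence Q \<longleftrightarrow> (\<forall>n\<ge>1. Q n \<ge> 2)"

definition cantor_expansion :: "(nat \<Rightarrow> nat) \<Rightarrow> real \<Rightarrow> (nat \<Rightarrow> int) \<Rightarrow> bool" where
  "cantor_expansion Q x E \<longleftrightarrow>
     E 0 = \<lfloor>x\<rfloor> \<and>
     (\<forall>n\<ge>1. 0 \<le> E n \<and> E n \<le> int (Q n) - 1) \<and>
     infinite {n. n \<ge> 1 \<and> E n \<noteq> int (Q n) - 1} \<and>
     (\<lambda>n. real_of_int (E (Suc n)) / (\<Prod>j=1..Suc n. real (Q j))) sums (x - real_of_int (E 0))"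

definition T_Q :: "(nat \<Rightarrow> nat) \<Rightarrow> nat \<Rightarrow> real \<Rightarrow> real" where
  "T_Q Q n x = frac ((\<Prod>j=1..n. real (Q j)) * x)"

definition uniformly_distributed_mod1 :: "(nat \<Rightarrow> real) \<Rightarrow> bool" where
  "uniformly_distributed_mod1 u \<longleftrightarrow>
     (\<forall>a b. 0 \<le> a \<and> a < b \<and> b \<le> 1 \<longrightarrow>
        (\<lambda>N. real (card {n. n < N \<and> a \<le> frac (u n) \<and> frac (u n) < b}) / real N)
          \<longlonglongrightarrow> b - a)"

definition Q_distribution_normal :: "(nat \<Rightarrow> nat) \<Rightarrow> real \<Rightarrow> bool" where
  "Q_distribution_normal Q x \<longleftrightarrow> uniformly_distributed_mod1 (\<lambda>n. T_Q Q n x)"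

end

theory Submission
  imports Defs
begin


lemma bad_lim:
  fixes d :: "nat \<Rightarrow> real"
  assumes d0: "\<And>n. 0 \<le> d n" and avg: "(\<lambda>N. (1/real N) * (\<Sum>n<N. d n)) \<longlonglongrightarrow> 0"
    and dp: "\<delta> > 0"
  shows "(\<lambda>N. real (card {n. n<N \<and> \<delta> \<le> d n}) / real N) \<longlonglongrightarrow> 0"
proof (rule tendsto_sandwich[of "\<lambda>_. 0" _ _ "\<lambda>N. ((1/real N) * (\<Sum>n<N. d n)) / \<delta>"])
  show "\<forall>\<^sub>F N in sequentially. 0 \<le> real (card {n. n<N \<and> \<delta> \<le> d n}) / real N" by simp
  show "\<forall>\<^sub>F N in sequentially. real (card {n. n<N \<and> \<delta> \<le> d n}) / real N \<le> ((1/real N) * (\<Sum>n<N. d n)) / \<delta>"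
  proof (intro always_eventually allI)
    fix N
    let ?S = "{n. n<N \<and> \<delta> \<le> d n}"
    have fin: "finite ?S" by simp
    have "real (card ?S) * \<delta> = (\<Sum>n\<in>?S. \<delta>)" by simp
    also have "\<dots> \<le> (\<Sum>n\<in>?S. d n)" by (rule sum_mono) auto
    also have "\<dots> \<le> (\<Sum>n<N. d n)" by (rule sum_mono2) (auto simp: d0)
    finally have "real (card ?S) * \<delta> \<le> (\<Sum>n<N. d n)" .
    hence "real (card ?S) \<le> (\<Sum>n<N. d n) / \<delta>" using dp by (simp add: field_simps)
    hence "real (card ?S) / real N \<le> (\<Sum>n<N. d n) / \<delta> / real N" by (rule divide_right_mono) simp
    thus "real (card ?S) / real N \<le> ((1/real N) * (\<Sum>n<N. d n)) / \<delta>" by (simp add: mult.commute)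
  qed
  show "(\<lambda>_. 0) \<longlonglongrightarrow> (0::real)" by simp
  show "(\<lambda>N. ((1/real N) * (\<Sum>n<N. d n)) / \<delta>) \<longlonglongrightarrow> 0"
    using tendsto_divide[OF avg tendsto_const[of \<delta>]] dp by simp
qed

lemma card_le_sum:
  fixes A B C :: "nat set"
  assumes "A \<subseteq> B \<union> C" "finite B" "finite C"
  shows "real (card A) / real N \<le> real (card B) / real N + real (card C) / real N"
proof -
  have "card A \<le> card (B \<union> C)" using assms by (intro card_mono) auto
  also have "\<dots> \<le> card B + card C" by (rule card_Un_le)
  finally have "real (card A) \<le> real (card B) + real (card C)" by linarith
  hence "real (card A) / real N \<le> (real (card B) + real (card C)) / real N"
    by (rule divide_right_mono) simp
  thus ?thesis by (simp add: add_divide_distrib)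
qed

lemma ud_perturb:
  fixes u v d :: "nat \<Rightarrow> real"
  assumes ud: "uniformly_distributed_mod1 u"
    and ur: "\<And>n. 0 \<le> u n \<and> u n < 1" and vr: "\<And>n. 0 \<le> v n \<and> v n < 1"
    and uv: "\<And>n. \<bar>u n - v n\<bar> \<le> d n"
    and avg: "(\<lambda>N. (1/real N) * (\<Sum>n<N. d n)) \<longlonglongrightarrow> 0"
  shows "uniformly_distributed_mod1 v"
proof -
  have fu: "frac (u n) = u n" for n using ur[of n] by (simp add: frac_eq)
  have fv: "frac (v n) = v n" for n using vr[of n] by (simp add: frac_eq)
  have d0: "0 \<le> d n" for n using uv[of n] by linarith
  have hu: "(\<lambda>N. real (card {n. n < N \<and> a \<le> u n \<and> u n < b}) / real N) \<longlonglongrightarrow> b - a"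
    if "0 \<le> a" "a < b" "b \<le> 1" for a b
    using ud that unfolding uniformly_distributed_mod1_def fu by blast
  show ?thesis unfolding uniformly_distributed_mod1_def fv
  proof (intro allI impI)
    fix a b :: real assume ab: "0 \<le> a \<and> a < b \<and> b \<le> 1"
    let ?cv = "\<lambda>N. real (card {n. n < N \<and> a \<le> v n \<and> v n < b}) / real N"
    show "?cv \<longlonglongrightarrow> b - a"
      unfolding tendsto_iff dist_real_def
    proof (intro allI impI)
      fix e :: real assume e: "e > 0"
      define \<delta> where "\<delta> = e/4"
      have dp: "\<delta> > 0" using e by (simp add: \<delta>_def)
      let ?bad = "\<lambda>N. real (card {n. n<N \<and> \<delta> \<le> d n}) / real N"
      have bad: "eventually (\<lambda>N. ?bad N < \<delta>) sequentially"
        using bad_lim[OF d0 avg dp] dp unfolding tendsto_iff dist_real_def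
        by (auto elim!: allE[of _ \<delta>] eventually_mono)
      define a' where "a' = max 0 (a - \<delta>)"
      define b' where "b' = min 1 (b + \<delta>)"
      have ab': "0 \<le> a'" "a' < b'" "b' \<le> 1" "b' - a' \<le> b - a + 2*\<delta>"
        using ab dp by (auto simp: a'_def b'_def)
      let ?cu' = "\<lambda>N. real (card {n. n < N \<and> a' \<le> u n \<and> u n < b'}) / real N"
      have cu': "eventually (\<lambda>N. \<bar>?cu' N - (b' - a')\<bar> < \<delta>) sequentially"
        using hu[OF ab'(1-3)] dp unfolding tendsto_iff dist_real_def by blast
      have upper: "eventually (\<lambda>N. ?cv N < b - a + e) sequentially"
        using eventually_conj[OF cu' bad]
      proof (rule eventually_mono)
        fix N assume h: "\<bar>?cu' N - (b' - a')\<bar> < \<delta> \<and> ?bad N < \<delta>"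
        have "{n. n < N \<and> a \<le> v n \<and> v n < b} \<subseteq>
              {n. n < N \<and> a' \<le> u n \<and> u n < b'} \<union> {n. n<N \<and> \<delta> \<le> d n}"
        proof
          fix n assume "n \<in> {n. n < N \<and> a \<le> v n \<and> v n < b}"
          moreover have "\<bar>u n - v n\<bar> \<le> d n" by (rule uv)
          moreover have "0 \<le> u n" "u n < 1" using ur[of n] by auto
          ultimately show "n \<in> {n. n < N \<and> a' \<le> u n \<and> u n < b'} \<union> {n. n<N \<and> \<delta> \<le> d n}"
            by (auto simp: a'_def b'_def)
        qed
        hence "?cv N \<le> ?cu' N + ?bad N" by (rule card_le_sum) auto
        moreover have "?cu' N < b' - a' + \<delta>" using h by linarith
        ultimately show "?cv N < b - a + e" using h ab'(4) unfolding \<delta>_def by linarith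
      qed
      have lower: "eventually (\<lambda>N. b - a - e < ?cv N) sequentially"
      proof (cases "a + \<delta> < b - \<delta>")
        case True
        have ab'': "0 \<le> a + \<delta>" "a + \<delta> < b - \<delta>" "b - \<delta> \<le> 1" using ab dp True by auto
        let ?cu = "\<lambda>N. real (card {n. n < N \<and> a + \<delta> \<le> u n \<and> u n < b - \<delta>}) / real N"
        have cu: "eventually (\<lambda>N. \<bar>?cu N - ((b - \<delta>) - (a + \<delta>))\<bar> < \<delta>) sequentially"
          using hu[OF ab''] dp unfolding tendsto_iff dist_real_def by blast
        show ?thesis
          using eventually_conj[OF cu bad]
        proof (rule eventually_mono)
          fix N assume h: "\<bar>?cu N - ((b - \<delta>) - (a + \<delta>))\<bar> < \<delta> \<and> ?bad N < \<delta>"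
          have "{n. n < N \<and> a + \<delta> \<le> u n \<and> u n < b - \<delta>} \<subseteq>
                {n. n < N \<and> a \<le> v n \<and> v n < b} \<union> {n. n<N \<and> \<delta> \<le> d n}"
          proof
            fix n assume "n \<in> {n. n < N \<and> a + \<delta> \<le> u n \<and> u n < b - \<delta>}"
            moreover have "\<bar>u n - v n\<bar> \<le> d n" by (rule uv)
            ultimately show "n \<in> {n. n < N \<and> a \<le> v n \<and> v n < b} \<union> {n. n<N \<and> \<delta> \<le> d n}"
              by auto
          qed
          hence "?cu N \<le> ?cv N + ?bad N" by (rule card_le_sum) auto
          moreover have "?cu N > (b - \<delta>) - (a + \<delta>) - \<delta>" using h by linarith
          ultimately show "b - a - e < ?cv N" using h unfolding \<delta>_def by linarith
        qed
      next
        case False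
        hence "b - a - e < 0" using dp by (simp add: \<delta>_def)
        moreover have "0 \<le> ?cv N" for N by simp
        ultimately show ?thesis by (intro always_eventually allI) (meson less_le_trans)
      qed
      show "eventually (\<lambda>N. \<bar>?cv N - (b - a)\<bar> < e) sequentially"
        using eventually_conj[OF upper lower] by (rule eventually_mono) auto
    qed
  qed
qed



definition PP :: "(nat \<Rightarrow> nat) \<Rightarrow> nat \<Rightarrow> nat \<Rightarrow> real" where
  "PP Q n k = (\<Prod>i<k. real (Q (n + 1 + i)))"

lemma PP_Suc: "PP Q n (Suc k) = PP Q n k * real (Q (n + 1 + k))"
  by (simp add: PP_def)

lemma PP_Suc_head: "PP Q n (Suc k) = real (Q (n + 1)) * PP Q (Suc n) k"
  unfolding PP_def by (subst prod.lessThan_Suc_shift) (simp add: add_ac)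

lemma PP_ge: assumes "basic_sequence Q" shows "PP Q n k \<ge> 2 ^ k"
proof (induction k)
  case 0 then show ?case by (simp add: PP_def)
next
  case (Suc k)
  have "Q (n + 1 + k) \<ge> 2" using assms by (simp add: basic_sequence_def)
  hence "real (Q (n + 1 + k)) \<ge> 2" by simp
  moreover have "(0::real) \<le> 2 ^ k" by simp
  ultimately have "PP Q n k * real (Q (n + 1 + k)) \<ge> 2 ^ k * 2"
    using Suc by (intro mult_mono) (auto intro: order_trans[OF \<open>(0::real) \<le> 2 ^ k\<close>])
  thus ?case by (simp add: PP_Suc mult.commute)
qed

lemma prod_PP: "(\<Prod>j=1..n. real (Q j)) = PP Q 0 n"
  unfolding PP_def using prod.atLeast1_atMost_eq[of "\<lambda>j. real (Q j)" n] by simp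

lemma expansion_R:
  assumes bs: "basic_sequence Q" and ce: "cantor_expansion Q x E"
  defines "R \<equiv> \<lambda>n. suminf (\<lambda>k. real_of_int (E (n+1+k)) / PP Q n (Suc k))"
  shows "0 \<le> R n \<and> R n < 1 \<and> T_Q Q n x = R n \<and>
         R n = (real_of_int (E (n+1)) + R (n+1)) / real (Q (n+1))"
proof -
  have Qge: "real (Q m) \<ge> 2" if "m \<ge> 1" for m using bs that by (simp add: basic_sequence_def)
  have Eb: "0 \<le> E m \<and> E m \<le> int (Q m) - 1" if "m \<ge> 1" for m
    using ce that by (simp add: cantor_expansion_def)
  have PPpos: "PP Q n k > 0" for n k
    using PP_ge[OF bs, where n=n and k=k] by (rule less_le_trans[rotated]) simp
  define t where "t n k = real_of_int (E (n+1+k)) / PP Q n (Suc k)" for n k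
  have t0: "0 \<le> t n k" for n k
    using Eb[of "n+1+k"] PPpos[of n "Suc k"] by (simp add: t_def)
  have tb: "t n k \<le> (1/2) ^ k" for n k
  proof -
    have "real_of_int (E (n+1+k)) \<le> real (Q (n+1+k))" using Eb[of "n+1+k"] by simp
    hence "t n k \<le> real (Q (n+1+k)) / (PP Q n k * real (Q (n+1+k)))"
      using PPpos[of n "Suc k"] unfolding t_def PP_Suc by (intro divide_right_mono) auto
    also have "\<dots> = 1 / PP Q n k" using Qge[of "n+1+k"] by simp
    also have "\<dots> \<le> 1 / 2 ^ k" using PP_ge[OF bs, where n=n and k=k]
      by (intro divide_left_mono) (auto intro: mult_pos_pos PPpos)
    finally show ?thesis by (simp add: power_one_over)
  qed
  have summ: "summable (t n)" for n
    by (rule summable_comparison_test'[where g="\<lambda>k. (1/2)^k" and N=0])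
       (use t0 tb in auto)
  have Rt: "R n = suminf (t n)" for n by (simp add: R_def t_def[abs_def])
  have R0: "0 \<le> R n" for n unfolding Rt by (intro suminf_nonneg summ t0)
  have R2: "R n \<le> 2" for n
  proof -
    have "suminf (t n) \<le> (\<Sum>k. (1/2::real)^k)"
      by (intro suminf_le summ tb summable_geometric) simp
    also have "\<dots> = 2" by (subst suminf_geometric) auto
    finally show ?thesis unfolding Rt .
  qed
  have rec: "R n = (real_of_int (E (n+1)) + R (n+1)) / real (Q (n+1))" for n
  proof -
    have "suminf (t n) = t n 0 + (\<Sum>k. t n (Suc k))"
      using suminf_split_head[OF summ[of n]] by simp
    moreover have "t n (Suc k) = (1 / real (Q (n+1))) * t (n+1) k" for k
      unfolding t_def PP_Suc_head[of Q n "Suc k"] by (simp add: add_ac)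
    moreover have "t n 0 = real_of_int (E (n+1)) / real (Q (n+1))"
      by (simp add: t_def PP_def)
    ultimately have "suminf (t n) = real_of_int (E (n+1)) / real (Q (n+1)) + (1 / real (Q (n+1))) * suminf (t (n+1))"
      using suminf_mult[OF summ[of "n+1"], of "1 / real (Q (n+1))"] by simp
    thus ?thesis unfolding Rt by (simp add: add_divide_distrib)
  qed
  have R1: "R n \<le> 1" for n
  proof -
    have ind: "\<forall>n. R n \<le> 1 + (1/2)^k" for k
    proof (induction k)
      case 0 then show ?case using R2 by simp
    next
      case (Suc k)
      show ?case
      proof
        fix n
        have q: "real (Q (n+1)) \<ge> 2" using Qge by simp
        have IH: "R (n+1) \<le> 1 + (1/2)^k" using Suc by blast
        have Eq: "real_of_int (E (n+1)) \<le> real (Q (n+1)) - 1" using Eb[of "n+1"] by simp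
        have "R n * real (Q (n+1)) = real_of_int (E (n+1)) + R (n+1)"
          using q by (subst rec[of n]) simp
        also have "\<dots> \<le> real (Q (n+1)) * 1 + (1/2)^k" using IH Eq by linarith
        also have "\<dots> \<le> real (Q (n+1)) * 1 + real (Q (n+1)) * (1/2)^(Suc k)"
          using q by simp
        finally have "R n * real (Q (n+1)) \<le> (1 + (1/2)^(Suc k)) * real (Q (n+1))"
          by (simp add: algebra_simps)
        thus "R n \<le> 1 + (1/2)^(Suc k)" using q by simp
      qed
    qed
    show ?thesis
    proof (rule field_le_epsilon)
      fix e :: real assume e: "0 < e"
      obtain k where "(1/2::real)^k < e" using real_arch_pow_inv[OF e, of "1/2"] by auto
      moreover have "R n \<le> 1 + (1/2)^k" using ind[of k] by blast
      ultimately show "R n \<le> 1 + e" by linarith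
    qed
  qed
  have key: "R (m+1) = 1 \<and> E (m+1) = int (Q (m+1)) - 1" if h: "R m = 1" for m
  proof -
    have q: "real (Q (m+1)) \<ge> 2" using Qge by simp
    have "R m * real (Q (m+1)) = real_of_int (E (m+1)) + R (m+1)"
      using q by (subst rec[of m]) simp
    hence "real (Q (m+1)) = real_of_int (E (m+1)) + R (m+1)" using h by simp
    moreover have "real_of_int (E (m+1)) \<le> real (Q (m+1)) - 1" using Eb[of "m+1"] by simp
    moreover note R1[of "m+1"]
    ultimately have "R (m+1) = 1" "real_of_int (E (m+1)) = real (Q (m+1)) - 1" by linarith+
    thus ?thesis by linarith
  qed
  have Rlt: "R n < 1" for n
  proof (rule ccontr)
    assume "\<not> R n < 1"
    hence Rn: "R n = 1" using R1[of n] by simp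
    have all: "R (n + i) = 1 \<and> E (n + i + 1) = int (Q (n+i+1)) - 1" for i
    proof (induction i)
      case 0 then show ?case using key[OF Rn] Rn by simp
    next
      case (Suc i)
      from Suc.IH have "R (n + i) = 1" by blast
      hence "R (n + i + 1) = 1" using key by blast
      from key[OF this] this show ?case by simp
    qed
    have "{m. m \<ge> 1 \<and> E m \<noteq> int (Q m) - 1} \<subseteq> {..n}"
    proof
      fix m assume m: "m \<in> {m. m \<ge> 1 \<and> E m \<noteq> int (Q m) - 1}"
      show "m \<in> {..n}"
      proof (rule ccontr)
        assume "m \<notin> {..n}"
        hence "m = n + (m - n - 1) + 1" by auto
        then obtain i where i: "m = n + i + 1" by blast
        hence "E m = int (Q m) - 1" using all[of i] by simp
        with m show False by simp
      qed
    qed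
    hence "finite {m. m \<ge> 1 \<and> E m \<noteq> int (Q m) - 1}" by (rule finite_subset) simp
    with ce show False by (simp add: cantor_expansion_def)
  qed
  have R0x: "R 0 = x - real_of_int (E 0)"
  proof -
    have "(\<lambda>k. real_of_int (E (Suc k)) / (\<Prod>j=1..Suc k. real (Q j))) sums (x - real_of_int (E 0))"
      using ce unfolding cantor_expansion_def by blast
    moreover have "(\<lambda>k. real_of_int (E (Suc k)) / (\<Prod>j=1..Suc k. real (Q j))) = t 0"
      by (rule ext) (unfold t_def prod_PP, simp)
    ultimately have "t 0 sums (x - real_of_int (E 0))" by simp
    thus ?thesis unfolding Rt by (rule sums_unique[symmetric])
  qed
  have int: "PP Q 0 m * x - R m \<in> \<int>" for m
  proof (induction m)
    case 0 then show ?case using R0x by (simp add: PP_def)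
  next
    case (Suc m)
    then obtain z where z: "PP Q 0 m * x - R m = of_int z" by (auto elim: Ints_cases)
    have q: "real (Q (m+1)) > 0" using Qge[of "m+1"] by simp
    have e1: "PP Q 0 (Suc m) * x - R (Suc m) = real (Q (m+1)) * (PP Q 0 m * x - R m) + (real (Q (m+1)) * R m - R (m+1))"
      unfolding PP_Suc by (simp add: algebra_simps)
    have "R m * real (Q (m+1)) = real_of_int (E (m+1)) + R (m+1)"
      using q by (subst rec[of m]) simp
    hence e2: "real (Q (m+1)) * R m - R (m+1) = real_of_int (E (m+1))" by (simp add: mult.commute)
    have "PP Q 0 (Suc m) * x - R (Suc m) = of_int (int (Q (m+1)) * z + E (m+1))"
      unfolding e1 e2 z by simp
    thus ?case by (metis Ints_of_int)
  qed
  have "T_Q Q n x = R n"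
    unfolding T_Q_def prod_PP frac_unique_iff using int[of n] R0[of n] Rlt[of n] by simp
  thus ?thesis using R0[of n] Rlt[of n] rec[of n] by simp
qed



theorem theorem3p2:
  fixes Q :: "nat \<Rightarrow> nat" and x y :: real and E F :: "nat \<Rightarrow> int"
  assumes "basic_sequence Q"
    and "cantor_expansion Q x E"
    and "Q_distribution_normal Q x"
    and "cantor_expansion Q y F"
    and "(\<lambda>N. (1 / real N) * (\<Sum>n=1..N. (real_of_int \<bar>E n - F n\<bar> + 1) / real (Q n))) \<longlonglongrightarrow> 0"
  shows "Q_distribution_normal Q y"
proof -
  define Rx where "Rx = (\<lambda>n. suminf (\<lambda>k. real_of_int (E (n+1+k)) / PP Q n (Suc k)))"
  define Ry where "Ry = (\<lambda>n. suminf (\<lambda>k. real_of_int (F (n+1+k)) / PP Q n (Suc k)))"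
  have hx: "0 \<le> Rx n \<and> Rx n < 1 \<and> T_Q Q n x = Rx n \<and>
         Rx n = (real_of_int (E (n+1)) + Rx (n+1)) / real (Q (n+1))" for n
    unfolding Rx_def by (rule expansion_R[OF assms(1,2)])
  have hy: "0 \<le> Ry n \<and> Ry n < 1 \<and> T_Q Q n y = Ry n \<and>
         Ry n = (real_of_int (F (n+1)) + Ry (n+1)) / real (Q (n+1))" for n
    unfolding Ry_def by (rule expansion_R[OF assms(1,4)])
  define d where "d n = (real_of_int \<bar>E (n+1) - F (n+1)\<bar> + 1) / real (Q (n+1))" for n
  have uv: "\<bar>T_Q Q n x - T_Q Q n y\<bar> \<le> d n" for n
  proof -
    have q: "real (Q (n+1)) \<ge> 2" using assms(1) by (simp add: basic_sequence_def)
    have ex: "T_Q Q n x = (real_of_int (E (n+1)) + Rx (n+1)) / real (Q (n+1))"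
    proof -
      have "T_Q Q n x = Rx n" "Rx n = (real_of_int (E (n+1)) + Rx (n+1)) / real (Q (n+1))"
        using hx[of n] by blast+
      thus ?thesis by (rule trans)
    qed
    have ey: "T_Q Q n y = (real_of_int (F (n+1)) + Ry (n+1)) / real (Q (n+1))"
    proof -
      have "T_Q Q n y = Ry n" "Ry n = (real_of_int (F (n+1)) + Ry (n+1)) / real (Q (n+1))"
        using hy[of n] by blast+
      thus ?thesis by (rule trans)
    qed
    have ee: "(real_of_int (E (n+1)) + Rx (n+1)) - (real_of_int (F (n+1)) + Ry (n+1)) = real_of_int (E (n+1) - F (n+1)) + (Rx (n+1) - Ry (n+1))"
      by simp
    have "T_Q Q n x - T_Q Q n y = (real_of_int (E (n+1) - F (n+1)) + (Rx (n+1) - Ry (n+1))) / real (Q (n+1))"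
      unfolding ex ey ee[symmetric] by (rule diff_divide_distrib[symmetric])
    also have "\<bar>\<dots>\<bar> = \<bar>real_of_int (E (n+1) - F (n+1)) + (Rx (n+1) - Ry (n+1))\<bar> / real (Q (n+1))"
      using q by simp
    also have "\<dots> \<le> d n" unfolding d_def
    proof (rule divide_right_mono)
      have "\<bar>Rx (n+1) - Ry (n+1)\<bar> \<le> 1" using hx[of "n+1"] hy[of "n+1"] by linarith
      thus "\<bar>real_of_int (E (n+1) - F (n+1)) + (Rx (n+1) - Ry (n+1))\<bar> \<le> real_of_int \<bar>E (n+1) - F (n+1)\<bar> + 1"
        by linarith
    qed simp
    finally show ?thesis .
  qed
  have avg: "(\<lambda>N. (1/real N) * (\<Sum>n<N. d n)) \<longlonglongrightarrow> 0"
  proof -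
    have "(\<Sum>n=1..N. (real_of_int \<bar>E n - F n\<bar> + 1) / real (Q n)) = (\<Sum>n<N. d n)" for N
      unfolding d_def using sum.atLeast1_atMost_eq[of "\<lambda>n. (real_of_int \<bar>E n - F n\<bar> + 1) / real (Q n)" N]
      by simp
    thus ?thesis using assms(5) by (simp only:)
  qed
  show ?thesis
    unfolding Q_distribution_normal_def
  proof (rule ud_perturb[OF assms(3)[unfolded Q_distribution_normal_def] _ _ uv avg])
    fix n
    have "T_Q Q n x = Rx n" "0 \<le> Rx n" "Rx n < 1" "T_Q Q n y = Ry n" "0 \<le> Ry n" "Ry n < 1"
      using hx[of n] hy[of n] by blast+
    thus "0 \<le> T_Q Q n x \<and> T_Q Q n x < 1" "0 \<le> T_Q Q n y \<and> T_Q Q n y < 1" by simp_all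
  qed
qed


end
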